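(* Let $\alpha_1,\dots,\alpha_m\in\mathbb C$ be distinct. For $i=1,\dots,n$ define the $B_n$-valued functions $$A_i=\sum_{k=1}^m\frac{Y_{i,k}}{z_i-\alpha_k}-\sum_{p\ne i}\frac{\nu s_{ip}}{z_i-z_p}.$$ Then the connection $\nabla$ on the trivial bundle with fiber $B_n$ given by the KZ system $\partial F/\partial z_i=A_iF$ ($i=1,\dots,n$) is flat, i.e. $\partial_iA_j-\partial_jA_i+[A_i,A_j]=0$ for all $i,j$.
   Context: $D$ is a star-shaped graph with $m$ legs, $d_k$ vertices in the $k$-th leg (including the node). $B_n$ is the $\mathbb C[\gamma,\nu]$-algebra ($\gamma=(\gamma_{kj})$) generated by $S_n$ (transpositions $s_{ij}$) and $Y_{i,k}$ ($1\le i\le n$, $1\le k\le m$) with relations, for $i\ne j$: $s_{ij}Y_{i,k}=Y_{j,k}s_{ij}$; $s_{ij}Y_{h,k}=Y_{h,k}s_{ij}$ for $h\ne i,j$; $\prod_{j=1}^{d_k}(Y_{i,k}-\gamma_{kj})=0$; $\sum_kY_{i,k}=\nu\sum_{j\ne i}s_{ij}$; $[Y_{i,k},Y_{j,k}]=\nu(Y_{i,k}-Y_{j,k})s_{ij}$; $[Y_{i,k},Y_{j,l}]=0$ for $k\ne l$. The functions $A_i$ are defined on the complement in $\mathbb C^n$ of the hyperplanes $z_i=z_p$ and $z_i=\alpha_k$. *)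

theory Defs
  imports "HOL-Analysis.Analysis" "HOL-Combinatorics.Transposition"
begin

text \<open>A unital C-algebra structure on a ring 'a is given by a central unital ring
  homomorphism sc from the complex numbers into 'a (scalar c acts as sc c * _).\<close>
definition scalar_structure :: "(complex \<Rightarrow> 'a::ring_1) \<Rightarrow> bool" where
  "scalar_structure sc \<longleftrightarrow>
     (\<forall>a b. sc (a + b) = sc a + sc b) \<and> (\<forall>a b. sc (a * b) = sc a * sc b) \<and>
     sc 1 = 1 \<and> (\<forall>c x. sc c * x = x * sc c)"

definition central :: "'a::ring_1 \<Rightarrow> bool" where
  "central a \<longleftrightarrow> (\<forall>x. a * x = x * a)"

definition commutator :: "'a::ring_1 \<Rightarrow> 'a \<Rightarrow> 'a" where
  "commutator a b = a * b - b * a"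

text \<open>The defining relations of B_n (over the ground ring 'a): Sg is the
  S_n-action (s_ij = Sg (Transposition.transpose i j)), Y i k the generators Y_{i,k},
  gam k j and nu the (central) parameters gamma_{kj}, nu; d k is the number of
  vertices on the k-th leg.\<close>
definition Bn_relations ::
  "nat \<Rightarrow> nat \<Rightarrow> (nat \<Rightarrow> nat) \<Rightarrow> ((nat \<Rightarrow> nat) \<Rightarrow> 'a::ring_1) \<Rightarrow> (nat \<Rightarrow> nat \<Rightarrow> 'a)
    \<Rightarrow> (nat \<Rightarrow> nat \<Rightarrow> 'a) \<Rightarrow> 'a \<Rightarrow> bool" where
  "Bn_relations n m d Sg Y gam nu \<longleftrightarrow>
     central nu \<and> (\<forall>k j. central (gam k j)) \<and>
     Sg id = 1 \<and>
     (\<forall>p q. p permutes {1..n} \<longrightarrow> q permutes {1..n} \<longrightarrow> Sg (p \<circ> q) = Sg p * Sg q) \<and>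
     (\<forall>i\<in>{1..n}. \<forall>j\<in>{1..n}. i \<noteq> j \<longrightarrow>
        (\<forall>k\<in>{1..m}. Sg (Transposition.transpose i j) * Y i k = Y j k * Sg (Transposition.transpose i j)) \<and>
        (\<forall>h\<in>{1..n}. h \<noteq> i \<longrightarrow> h \<noteq> j \<longrightarrow>
           (\<forall>k\<in>{1..m}. Sg (Transposition.transpose i j) * Y h k = Y h k * Sg (Transposition.transpose i j))) \<and>
        (\<forall>k\<in>{1..m}. commutator (Y i k) (Y j k) = nu * (Y i k - Y j k) * Sg (Transposition.transpose i j)) \<and>
        (\<forall>k\<in>{1..m}. \<forall>l\<in>{1..m}. k \<noteq> l \<longrightarrow> commutator (Y i k) (Y j l) = 0)) \<and>
     (\<forall>i\<in>{1..n}. \<forall>k\<in>{1..m}. prod_list (map (\<lambda>j. Y i k - gam k j) [1..<Suc (d k)]) = 0) \<and>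
     (\<forall>i\<in>{1..n}. (\<Sum>k=1..m. Y i k) = nu * (\<Sum>j\<in>{1..n} - {i}. Sg (Transposition.transpose i j)))"

text \<open>'a-valued functions on C^n of the form  z \<mapsto> sum_l c_l(z) b_l  with scalar
  coefficient functions c_l, represented by the list of pairs (c_l, b_l).\<close>
type_synonym 'a coeff_rep = "(((nat \<Rightarrow> complex) \<Rightarrow> complex) \<times> 'a) list"

definition rep_eval :: "(complex \<Rightarrow> 'a::ring_1) \<Rightarrow> 'a coeff_rep \<Rightarrow> (nat \<Rightarrow> complex) \<Rightarrow> 'a" where
  "rep_eval sc R z = sum_list (map (\<lambda>(c, b). sc (c z) * b) R)"

definition rep_pderiv :: "nat \<Rightarrow> 'a coeff_rep \<Rightarrow> 'a coeff_rep" where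
  "rep_pderiv i R = map (\<lambda>(c, b). (\<lambda>z. deriv (\<lambda>w. c (z(i := w))) (z i), b)) R"

definition KZ_A :: "nat \<Rightarrow> nat \<Rightarrow> (nat \<Rightarrow> complex) \<Rightarrow> ((nat \<Rightarrow> nat) \<Rightarrow> 'a::ring_1)
    \<Rightarrow> (nat \<Rightarrow> nat \<Rightarrow> 'a) \<Rightarrow> 'a \<Rightarrow> nat \<Rightarrow> 'a coeff_rep" where
  "KZ_A n m alpha Sg Y nu i =
     map (\<lambda>k. (\<lambda>z. 1 / (z i - alpha k), Y i k)) [1..<Suc m] @
     map (\<lambda>p. (\<lambda>z. - 1 / (z i - z p), nu * Sg (Transposition.transpose i p)))
         (filter (\<lambda>p. p \<noteq> i) [1..<Suc n])"

end

theory Submission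
  imports Defs
begin

lemma rep_eval_append: "rep_eval sc (xs @ ys) z = rep_eval sc xs z + rep_eval sc ys z"
  by (simp add: rep_eval_def)

lemma sl1: "sum_list (map f [1..<Suc m]) = sum f {1..m}"
  by (simp add: sum_list_distinct_conv_sum_set atLeastLessThanSuc_atLeastAtMost del: upt_Suc)

lemma sl2: "sum_list (map f (filter (\<lambda>p. p \<noteq> i) [1..<Suc n])) = sum f ({1..n} - {i})"
proof -
  have "set (filter (\<lambda>p. p \<noteq> i) [1..<Suc n]) = {1..n} - {i}" by auto
  then show ?thesis by (simp add: sum_list_distinct_conv_sum_set del: upt_Suc)
qed

lemma KZ_eval:
  "rep_eval sc (KZ_A n m alpha Sg Y nu i) z =
    (\<Sum>k=1..m. sc (1 / (z i - alpha k)) * Y i k) +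
    (\<Sum>p\<in>{1..n}-{i}. sc (- 1 / (z i - z p)) * (nu * Sg (Transposition.transpose i p)))"
  unfolding KZ_A_def rep_eval_append rep_eval_def map_map
  by (simp only: sum_list_append map_append map_map sl1 sl2 o_def split)

lemma KZ_deriv_eval:
  "rep_eval sc (rep_pderiv i (KZ_A n m alpha Sg Y nu j)) z =
    (\<Sum>k=1..m. sc (deriv (\<lambda>w. 1 / ((z(i:=w)) j - alpha k)) (z i)) * Y j k) +
    (\<Sum>p\<in>{1..n}-{j}. sc (deriv (\<lambda>w. - 1 / ((z(i:=w)) j - (z(i:=w)) p)) (z i)) * (nu * Sg (Transposition.transpose j p)))"
  unfolding KZ_A_def rep_pderiv_def map_append rep_eval_append rep_eval_def map_map
  by (simp only: sum_list_append map_append map_map sl1 sl2 o_def split)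

lemma deriv_inv: "c \<noteq> x \<Longrightarrow> deriv (\<lambda>w. - (1 / (c - w))) x = - (1 / (c - x)^2)"
  apply (rule DERIV_imp_deriv)
  apply (auto intro!: derivative_eq_intros simp: field_simps power2_eq_square)
  done


lemma sc_0: "scalar_structure sc \<Longrightarrow> sc 0 = 0"
  unfolding scalar_structure_def by (metis add_cancel_right_right add_0)

lemma sc_add: "scalar_structure sc \<Longrightarrow> sc (a + b) = sc a + sc b"
  unfolding scalar_structure_def by blast

lemma sc_mult: "scalar_structure sc \<Longrightarrow> sc (a * b) = sc a * sc b"
  unfolding scalar_structure_def by blast

lemma sc_comm: "scalar_structure sc \<Longrightarrow> sc a * x = x * sc a"
  unfolding scalar_structure_def by blast

lemma sum_single: "finite S \<Longrightarrow> k \<in> S \<Longrightarrow> (\<And>l. l \<in> S \<Longrightarrow> l \<noteq> k \<Longrightarrow> g l = 0) \<Longrightarrow> sum g S = g k"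
  by (simp add: sum.remove)

lemma comm_sums:
  assumes sc: "scalar_structure sc" and fin: "finite X" "finite Z"
  shows "commutator (\<Sum>x\<in>X. sc (f x) * u x) (\<Sum>y\<in>Z. sc (g y) * v y)
       = (\<Sum>x\<in>X. \<Sum>y\<in>Z. sc (f x * g y) * commutator (u x) (v y))"
proof -
  have e1: "sc (f x) * u x * (sc (g y) * v y) = sc (f x * g y) * (u x * v y)" for x y
  proof -
    have "sc (f x) * u x * (sc (g y) * v y) = sc (f x) * (u x * sc (g y)) * v y"
      by (simp add: mult.assoc)
    also have "\<dots> = sc (f x) * sc (g y) * (u x * v y)"
      using sc_comm[OF sc, of "g y" "u x"] by (metis mult.assoc)
    finally show ?thesis using sc_mult[OF sc] by simp
  qed
  have e2: "sc (g y) * v y * (sc (f x) * u x) = sc (f x * g y) * (v y * u x)" for x y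
  proof -
    have "sc (g y) * v y * (sc (f x) * u x) = sc (g y) * (v y * sc (f x)) * u x"
      by (simp add: mult.assoc)
    also have "\<dots> = sc (g y) * sc (f x) * (v y * u x)"
      using sc_comm[OF sc, of "f x" "v y"] by (metis mult.assoc)
    finally show ?thesis using sc_mult[OF sc, of "g y" "f x"] by (simp add: mult.commute)
  qed
  show ?thesis
    unfolding commutator_def sum_product e1 e2
    apply (simp add: sum_subtractf right_diff_distrib)
    by (rule sum.swap)
qed

lemma comm_add: "commutator (a + b) (c + d :: 'a::ring_1) =
   commutator a c + commutator a d + commutator b c + commutator b d"
  by (simp add: commutator_def algebra_simps)

lemma D_eval:
  assumes sc: "scalar_structure sc" and ij: "i \<noteq> j" "i \<in> {1..n}" and zz: "z j \<noteq> z i"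
  shows "rep_eval sc (rep_pderiv i (KZ_A n m alpha Sg Y nu j)) z
     = sc (- 1 / (z j - z i)^2) * (nu * Sg (Transposition.transpose i j))"
proof -
  have "(\<Sum>p\<in>{1..n}-{j}. sc (deriv (\<lambda>w. - 1 / ((z(i:=w)) j - (z(i:=w)) p)) (z i)) * (nu * Sg (Transposition.transpose j p)))
     = sc (deriv (\<lambda>w. - 1 / ((z(i:=w)) j - (z(i:=w)) i)) (z i)) * (nu * Sg (Transposition.transpose j i))"
    apply (rule sum_single)
    using ij by (auto simp: sc_0[OF sc])
  moreover have "(\<Sum>k=1..m. sc (deriv (\<lambda>w. 1 / ((z(i:=w)) j - alpha k)) (z i)) * Y j k) = 0"
    using ij by (simp add: sc_0[OF sc])
  ultimately show ?thesis unfolding KZ_deriv_eval using ij zz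
    by (simp add: deriv_inv transpose_commute)
qed

lemma perm3:
  assumes "i \<noteq> j" "j \<noteq> r" "i \<noteq> r"
  shows "Transposition.transpose i j \<circ> Transposition.transpose j r = Transposition.transpose j r \<circ> Transposition.transpose i r"
    "Transposition.transpose i j \<circ> Transposition.transpose j r = Transposition.transpose i r \<circ> Transposition.transpose i j"
    "Transposition.transpose j r \<circ> Transposition.transpose i j = Transposition.transpose i r \<circ> Transposition.transpose j r"
    "Transposition.transpose j r \<circ> Transposition.transpose i j = Transposition.transpose i j \<circ> Transposition.transpose i r"
  using assms by (auto simp: fun_eq_iff Transposition.transpose_def)

lemma perm_disj:
  assumes "i \<noteq> j" "i \<noteq> q" "p \<noteq> j" "p \<noteq> q"
  shows "Transposition.transpose i p \<circ> Transposition.transpose j q = Transposition.transpose j q \<circ> Transposition.transpose i p"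
  using assms by (auto simp: fun_eq_iff Transposition.transpose_def)


lemma sc_minus: "scalar_structure sc \<Longrightarrow> sc (- a) = - sc a"
  using sc_add[of sc a "-a"] sc_0[of sc] by (simp add: eq_neg_iff_add_eq_0 add.commute)

lemma comm_nu: "central nu \<Longrightarrow> commutator (nu * x) (nu * y) = nu * nu * commutator x y"
  unfolding central_def commutator_def
  by (metis mult.assoc right_diff_distrib)

lemma g2:
  fixes x y :: complex
  assumes "x \<noteq> 0" "y \<noteq> 0" "y - x \<noteq> 0" "x - y \<noteq> 0"
  shows "- 1 / (x - y) * (- 1 / y) + - 1 / x * (- 1 / (y - x)) - - 1 / x * (- 1 / y) = 0"
proof -
  have 1: "- 1 / (x - y) * (- 1 / y) = x / (x * y * (x - y))" using assms by (simp add: field_simps)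
  have 2: "- 1 / x * (- 1 / (y - x)) = - y / (x * y * (x - y))" using assms by (simp add: field_simps)
  have 3: "- 1 / x * (- 1 / y) = (x - y) / (x * y * (x - y))" using assms by (simp add: field_simps)
  show ?thesis unfolding 1 2 3 by (simp only: diff_divide_distrib[symmetric] add_divide_distrib[symmetric]) simp
qed
lemma g1:
  fixes x y :: complex
  assumes "x \<noteq> 0" "y \<noteq> 0" "y - x \<noteq> 0" "x - y \<noteq> 0"
  shows "1 / x * (1 / y) + 1 / x * (- 1 / (y - x)) + - 1 / (x - y) * (1 / y) = 0"
  using assms by (simp add: field_simps)
lemma scal1:
  fixes a b c :: complex
  assumes "a \<noteq> c" "b \<noteq> c" "a \<noteq> b"
  shows "1 / (a - c) * (1 / (b - c)) + 1 / (a - c) * (- 1 / (b - a)) + - 1 / (a - b) * (1 / (b - c)) = 0"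
  using g1[of "a - c" "b - c"] assms by (simp add: algebra_simps)
lemma scal2:
  fixes a b c :: complex
  assumes "a \<noteq> c" "b \<noteq> c" "a \<noteq> b"
  shows "- 1 / (a - b) * (- 1 / (b - c)) + - 1 / (a - c) * (- 1 / (b - a)) - - 1 / (a - c) * (- 1 / (b - c)) = 0"
  using g2[of "a - c" "b - c"] assms by (simp add: algebra_simps)


lemma comm_zero1: "central nu \<Longrightarrow> s * y = y * s \<Longrightarrow> commutator y (nu * s) = 0"
  unfolding central_def commutator_def by (metis mult.assoc right_minus_eq)

lemma comm_zero2: "central nu \<Longrightarrow> s * y = y * s \<Longrightarrow> commutator (nu * s) y = 0"
  unfolding central_def commutator_def by (metis mult.assoc right_minus_eq)

lemma comm_W1: "central nu \<Longrightarrow> s * y = y' * s \<Longrightarrow> commutator y (nu * s) = nu * (y - y') * s"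
  unfolding central_def commutator_def by (metis mult.assoc left_diff_distrib right_diff_distrib)

lemma comm_W2: "central nu \<Longrightarrow> s * y' = y * s \<Longrightarrow> commutator (nu * s) y' = nu * (y - y') * s"
  unfolding central_def commutator_def by (metis mult.assoc left_diff_distrib right_diff_distrib)

context
  fixes n m :: nat and d :: "nat \<Rightarrow> nat" and alpha :: "nat \<Rightarrow> complex"
    and sc :: "complex \<Rightarrow> 'a::ring_1"
    and Sg :: "(nat \<Rightarrow> nat) \<Rightarrow> 'a" and Y gam :: "nat \<Rightarrow> nat \<Rightarrow> 'a" and nu :: 'a
    and z :: "nat \<Rightarrow> complex" and i j :: nat
  assumes sc: "scalar_structure sc"
    and rel: "Bn_relations n m d Sg Y gam nu"
    and zd: "\<forall>a\<in>{1..n}. \<forall>b\<in>{1..n}. a \<noteq> b \<longrightarrow> z a \<noteq> z b"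
    and za: "\<forall>a\<in>{1..n}. \<forall>k\<in>{1..m}. z a \<noteq> alpha k"
    and ii: "i \<in> {1..n}" and jj: "j \<in> {1..n}" and ij: "i \<noteq> j"
begin

lemma nuc: "central nu" using rel unfolding Bn_relations_def by blast

lemma Sgmul: "p permutes {1..n} \<Longrightarrow> q permutes {1..n} \<Longrightarrow> Sg (p \<circ> q) = Sg p * Sg q"
  using rel unfolding Bn_relations_def by blast

lemma R1: "a \<in> {1..n} \<Longrightarrow> b \<in> {1..n} \<Longrightarrow> a \<noteq> b \<Longrightarrow> k \<in> {1..m} \<Longrightarrow>
   Sg (Transposition.transpose a b) * Y a k = Y b k * Sg (Transposition.transpose a b)"
  using rel unfolding Bn_relations_def by blast

lemma R2: "a \<in> {1..n} \<Longrightarrow> b \<in> {1..n} \<Longrightarrow> a \<noteq> b \<Longrightarrow> h \<in> {1..n} \<Longrightarrow> h \<noteq> a \<Longrightarrow> h \<noteq> b \<Longrightarrow> k \<in> {1..m} \<Longrightarrow>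
   Sg (Transposition.transpose a b) * Y h k = Y h k * Sg (Transposition.transpose a b)"
  using rel unfolding Bn_relations_def by blast

lemma R3: "a \<in> {1..n} \<Longrightarrow> b \<in> {1..n} \<Longrightarrow> a \<noteq> b \<Longrightarrow> k \<in> {1..m} \<Longrightarrow>
   commutator (Y a k) (Y b k) = nu * (Y a k - Y b k) * Sg (Transposition.transpose a b)"
  using rel unfolding Bn_relations_def by blast

lemma R4: "a \<in> {1..n} \<Longrightarrow> b \<in> {1..n} \<Longrightarrow> a \<noteq> b \<Longrightarrow> k \<in> {1..m} \<Longrightarrow> l \<in> {1..m} \<Longrightarrow> k \<noteq> l \<Longrightarrow>
   commutator (Y a k) (Y b l) = 0"
  using rel unfolding Bn_relations_def by blast

abbreviation "W k \<equiv> nu * (Y i k - Y j k) * Sg (Transposition.transpose i j)"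

lemma T1: "commutator (\<Sum>k=1..m. sc (1 / (z i - alpha k)) * Y i k) (\<Sum>k=1..m. sc (1 / (z j - alpha k)) * Y j k)
  = (\<Sum>k=1..m. sc (1 / (z i - alpha k) * (1 / (z j - alpha k))) * W k)"
proof -
  have "(\<Sum>l=1..m. sc (1 / (z i - alpha k) * (1 / (z j - alpha l))) * commutator (Y i k) (Y j l))
     = sc (1 / (z i - alpha k) * (1 / (z j - alpha k))) * W k" if k: "k \<in> {1..m}" for k
    apply (subst sum_single[where k=k])
    using k R4[OF ii jj ij k] R3[OF ii jj ij k] by auto
  then show ?thesis by (simp add: comm_sums[OF sc])
qed

lemma T2: "commutator (\<Sum>k=1..m. sc (1 / (z i - alpha k)) * Y i k)
      (\<Sum>p\<in>{1..n}-{j}. sc (- 1 / (z j - z p)) * (nu * Sg (Transposition.transpose j p)))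
  = (\<Sum>k=1..m. sc (1 / (z i - alpha k) * (- 1 / (z j - z i))) * W k)"
proof -
  have "(\<Sum>q\<in>{1..n}-{j}. sc (1 / (z i - alpha k) * (- 1 / (z j - z q))) * commutator (Y i k) (nu * Sg (Transposition.transpose j q)))
     = sc (1 / (z i - alpha k) * (- 1 / (z j - z i))) * W k" if k: "k \<in> {1..m}" for k
  proof -
    have z0: "commutator (Y i k) (nu * Sg (Transposition.transpose j q)) = 0" if "q \<in> {1..n}-{j}" "q \<noteq> i" for q
      using comm_zero1[OF nuc R2[of j q i k]] that jj ii ij k by auto
    have "commutator (Y i k) (nu * Sg (Transposition.transpose j i)) = W k"
      using comm_W1[OF nuc R1[OF ii jj ij k]] by (simp add: transpose_commute)
    then show ?thesis
      apply (subst sum_single[where k=i])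
      using z0 ii ij by auto
  qed
  then show ?thesis by (simp add: comm_sums[OF sc])
qed

lemma T3: "commutator (\<Sum>p\<in>{1..n}-{i}. sc (- 1 / (z i - z p)) * (nu * Sg (Transposition.transpose i p)))
      (\<Sum>k=1..m. sc (1 / (z j - alpha k)) * Y j k)
  = (\<Sum>k=1..m. sc (- 1 / (z i - z j) * (1 / (z j - alpha k))) * W k)"
proof -
  have "(\<Sum>p\<in>{1..n}-{i}. \<Sum>l=1..m. sc (- 1 / (z i - z p) * (1 / (z j - alpha l))) * commutator (nu * Sg (Transposition.transpose i p)) (Y j l))
     = (\<Sum>l=1..m. sc (- 1 / (z i - z j) * (1 / (z j - alpha l))) * commutator (nu * Sg (Transposition.transpose i j)) (Y j l))"
  proof (rule sum_single)
    fix p assume p: "p \<in> {1..n}-{i}" "p \<noteq> j"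
    show "(\<Sum>l=1..m. sc (- 1 / (z i - z p) * (1 / (z j - alpha l))) * commutator (nu * Sg (Transposition.transpose i p)) (Y j l)) = 0"
      apply (rule sum.neutral)
      using comm_zero2[OF nuc R2[of i p j]] p ii jj ij by auto
  qed (use jj ij in auto)
  moreover have "commutator (nu * Sg (Transposition.transpose i j)) (Y j l) = W l" if l: "l \<in> {1..m}" for l
    using comm_W2[OF nuc, of "Sg (Transposition.transpose i j)" "Y j l" "Y i l"] R1[OF jj ii ij[symmetric] l]
    by (simp add: transpose_commute)
  ultimately show ?thesis by (simp add: comm_sums[OF sc])
qed

lemma Sgcomm: "a \<in> {1..n} \<Longrightarrow> b \<in> {1..n} \<Longrightarrow> c \<in> {1..n} \<Longrightarrow> e \<in> {1..n} \<Longrightarrow>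
   Transposition.transpose a b \<circ> Transposition.transpose c e = f \<circ> g \<Longrightarrow>
   f permutes {1..n} \<Longrightarrow> g permutes {1..n} \<Longrightarrow>
   Sg (Transposition.transpose a b) * Sg (Transposition.transpose c e) = Sg f * Sg g"
  by (metis Sgmul permutes_swap_id)

lemma T4: "commutator (\<Sum>p\<in>{1..n}-{i}. sc (- 1 / (z i - z p)) * (nu * Sg (Transposition.transpose i p)))
      (\<Sum>p\<in>{1..n}-{j}. sc (- 1 / (z j - z p)) * (nu * Sg (Transposition.transpose j p))) = 0"
proof -
  define G where "G p q = sc (- 1 / (z i - z p) * (- 1 / (z j - z q))) *
     commutator (nu * Sg (Transposition.transpose i p)) (nu * Sg (Transposition.transpose j q))" for p q
  define R where "R = {1..n} - {i, j}"
  have P: "{1..n}-{i} = insert j R" "{1..n}-{j} = insert i R" "j \<notin> R" "i \<notin> R" "finite R"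
    using ii jj ij by (auto simp: R_def)
  have C: "commutator (\<Sum>p\<in>{1..n}-{i}. sc (- 1 / (z i - z p)) * (nu * Sg (Transposition.transpose i p)))
      (\<Sum>p\<in>{1..n}-{j}. sc (- 1 / (z j - z p)) * (nu * Sg (Transposition.transpose j p)))
     = (\<Sum>p\<in>insert j R. \<Sum>q\<in>insert i R. G p q)"
    unfolding G_def P(1,2)[symmetric] by (simp add: comm_sums[OF sc])
  have diag: "(\<Sum>q\<in>R. G p q) = G p p" if p: "p \<in> R" for p
  proof (rule sum_single)
    fix q assume q: "q \<in> R" "q \<noteq> p"
    have "Sg (Transposition.transpose i p) * Sg (Transposition.transpose j q) =
          Sg (Transposition.transpose j q) * Sg (Transposition.transpose i p)"
      apply (rule Sgcomm)
      using p q ii jj ij by (auto simp: R_def intro!: perm_disj permutes_swap_id)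
    then show "G p q = 0" unfolding G_def comm_nu[OF nuc] by (simp add: commutator_def)
  qed (use p P in auto)
  have Gji: "G j i = 0" unfolding G_def comm_nu[OF nuc] by (simp add: commutator_def transpose_commute)
  have per: "G j r + G r i + G r r = 0" if r: "r \<in> R" for r
  proof -
    have r': "r \<in> {1..n}" "r \<noteq> i" "r \<noteq> j" using r by (auto simp: R_def)
    define A where "A = Sg (Transposition.transpose i j)"
    define B where "B = Sg (Transposition.transpose j r)"
    define Cc where "Cc = Sg (Transposition.transpose i r)"
    have pm: "Transposition.transpose a b permutes {1..n}" if "a \<in> {1..n}" "b \<in> {1..n}" for a b
      using that by (rule permutes_swap_id)
    have h1: "A * B = B * Cc" unfolding A_def B_def Cc_def
      by (rule Sgcomm) (use ii jj r' ij in \<open>auto intro: perm3 pm permutes_swap_id\<close>)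
    have h2: "A * B = Cc * A" unfolding A_def B_def Cc_def
      by (rule Sgcomm) (use ii jj r' ij in \<open>auto intro: perm3 pm permutes_swap_id\<close>)
    have h3: "B * A = Cc * B" unfolding A_def B_def Cc_def
      by (rule Sgcomm) (use ii jj r' ij in \<open>auto intro: perm3 pm permutes_swap_id\<close>)
    have h4: "B * A = A * Cc" unfolding A_def B_def Cc_def
      by (rule Sgcomm) (use ii jj r' ij in \<open>auto intro: perm3 pm permutes_swap_id\<close>)
    define E where "E = nu * nu * (A * B - B * A)"
    define x where "x = - 1 / (z i - z j) * (- 1 / (z j - z r))"
    define y where "y = - 1 / (z i - z r) * (- 1 / (z j - z i))"
    define w where "w = - 1 / (z i - z r) * (- 1 / (z j - z r))"
    have g1: "G j r = sc x * E" unfolding G_def comm_nu[OF nuc] unfolding x_def E_def commutator_def A_def B_def by simp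
    have g2: "G r i = sc y * E" unfolding G_def comm_nu[OF nuc] unfolding y_def E_def commutator_def
      using h2 h4 by (simp add: transpose_commute A_def Cc_def)
    have g3: "G r r = - (sc w * E)" unfolding G_def comm_nu[OF nuc] unfolding w_def E_def commutator_def
      using h1 h3 by (simp add: B_def Cc_def algebra_simps)
    have "x + y - w = 0" unfolding x_def y_def w_def
      using scal2[of "z i" "z r" "z j"] zd ii jj r' ij by auto
    then have "sc x + sc y - sc w = 0"
      using sc_add[OF sc] sc_minus[OF sc] sc_0[OF sc] by (metis diff_conv_add_uminus)
    then have "(sc x + sc y - sc w) * E = 0" by simp
    then show ?thesis unfolding g1 g2 g3 by (simp add: algebra_simps)
  qed
  have "(\<Sum>p\<in>insert j R. \<Sum>q\<in>insert i R. G p q) = (G j i + (\<Sum>r\<in>R. G j r)) + (\<Sum>p\<in>R. G p i + (\<Sum>q\<in>R. G p q))"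
    using P by simp
  also have "\<dots> = (\<Sum>r\<in>R. G j r + G r i + G r r)"
    using Gji diag by (simp add: sum.distrib)
  also have "\<dots> = 0" using per by simp
  finally show ?thesis using C by simp
qed

end

theorem lemma4p1:
  fixes n m :: nat and d :: "nat \<Rightarrow> nat" and alpha :: "nat \<Rightarrow> complex"
    and sc :: "complex \<Rightarrow> 'a::ring_1"
    and Sg :: "(nat \<Rightarrow> nat) \<Rightarrow> 'a" and Y gam :: "nat \<Rightarrow> nat \<Rightarrow> 'a" and nu :: 'a
    and z :: "nat \<Rightarrow> complex" and i j :: nat
  assumes "scalar_structure sc"
    and "Bn_relations n m d Sg Y gam nu"
    and "inj_on alpha {1..m}"
    and "\<forall>a\<in>{1..n}. \<forall>b\<in>{1..n}. a \<noteq> b \<longrightarrow> z a \<noteq> z b"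
    and "\<forall>a\<in>{1..n}. \<forall>k\<in>{1..m}. z a \<noteq> alpha k"
    and "i \<in> {1..n}" and "j \<in> {1..n}"
  shows "rep_eval sc (rep_pderiv i (KZ_A n m alpha Sg Y nu j)) z
         - rep_eval sc (rep_pderiv j (KZ_A n m alpha Sg Y nu i)) z
         + commutator (rep_eval sc (KZ_A n m alpha Sg Y nu i) z)
                      (rep_eval sc (KZ_A n m alpha Sg Y nu j) z) = 0"
proof (cases "i = j")
  case True
  then show ?thesis by (simp add: commutator_def)
next
  case False
  note ctx = assms(1,2,4,5,6,7) False
  have zij: "z j \<noteq> z i" "z i \<noteq> z j" using assms(4,6,7) False by auto
  have D1: "rep_eval sc (rep_pderiv i (KZ_A n m alpha Sg Y nu j)) z
     = sc (- 1 / (z j - z i)^2) * (nu * Sg (Transposition.transpose i j))"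
    using D_eval[OF assms(1) False assms(6) zij(1)] by simp
  have D2: "rep_eval sc (rep_pderiv j (KZ_A n m alpha Sg Y nu i)) z
     = sc (- 1 / (z j - z i)^2) * (nu * Sg (Transposition.transpose i j))"
    using D_eval[OF assms(1) False[symmetric] assms(7) zij(2)]
    by (simp add: power2_commute transpose_commute)
  have Z: "sc (1 / (z i - alpha k) * (1 / (z j - alpha k))) * (nu * (Y i k - Y j k) * Sg (Transposition.transpose i j))
      + sc (1 / (z i - alpha k) * (- 1 / (z j - z i))) * (nu * (Y i k - Y j k) * Sg (Transposition.transpose i j))
      + sc (- 1 / (z i - z j) * (1 / (z j - alpha k))) * (nu * (Y i k - Y j k) * Sg (Transposition.transpose i j)) = 0" if k: "k \<in> {1..m}" for k
  proof -
    have "1 / (z i - alpha k) * (1 / (z j - alpha k)) + 1 / (z i - alpha k) * (- 1 / (z j - z i))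
       + - 1 / (z i - z j) * (1 / (z j - alpha k)) = 0"
      using scal1[of "z i" "alpha k" "z j"] assms(5,6,7) zij k by auto
    then have "sc (1 / (z i - alpha k) * (1 / (z j - alpha k))) + sc (1 / (z i - alpha k) * (- 1 / (z j - z i)))
       + sc (- 1 / (z i - z j) * (1 / (z j - alpha k))) = 0"
      using sc_add[OF assms(1)] sc_0[OF assms(1)] by metis
    then show ?thesis by (metis distrib_right mult_zero_left)
  qed
  show ?thesis
    unfolding D1 D2 KZ_eval comm_add T1[OF ctx] T2[OF ctx] T3[OF ctx] T4[OF ctx]
    using Z by (simp add: sum.distrib[symmetric])
qed

end
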